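(* Let $(\Omega,\mathbb{P})$ be a probability space and let $T\colon\Omega\to\Omega$ be an ergodic measure-preserving transformation. Let $f\ge 0$ be a measurable function on $\Omega$ and let $m\ge 0$ be an integer. (a) If $f\in L^1(\mathbb{P})$ and $m>0$, then for $\mathbb{P}$-almost every $\omega$, $$\lim_{n\to\infty}\mathcal{M}_m\big(f(\omega),f(T\omega),\dots,f(T^{n-1}\omega)\big)=\int f\,\mathrm{d}\mathbb{P}.$$ (b) If $\log f\in L^1(\mathbb{P})$, then for $\mathbb{P}$-almost every $\omega$, $$\lim_{n\to\infty}\mathcal{M}_{n-m}\big(f(\omega),f(T\omega),\dots,f(T^{n-1}\omega)\big)=\exp\Big(\int\log f\,\mathrm{d}\mathbb{P}\Big).$$
   Context: For integers $1\le k\le n$, the elementary symmetric polynomial of degree $k$ in $n$ variables is $E_k(x_1,\dots,x_n)=\sum_{1\le i_1<\dots<i_k\le n}x_{i_1}\cdots x_{i_k}$. For nonnegative reals $x_1,\dots,x_n$, the $k$-th symmetric mean is $\mathcal{M}_k(x_1,\dots,x_n)=\big(E_k(x_1,\dots,x_n)/\binom{n}{k}\big)^{1/k}$. In (a) the limit is over $n\ge m$, and in (b) over $n>m$. *)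

theory Defs
  imports "HOL-Probability.Probability"
begin

definition esym :: "nat \<Rightarrow> nat \<Rightarrow> (nat \<Rightarrow> real) \<Rightarrow> real" where
  "esym k n x = (\<Sum>S\<in>{S. S \<subseteq> {..<n} \<and> card S = k}. \<Prod>i\<in>S. x i)"

definition symmean :: "nat \<Rightarrow> nat \<Rightarrow> (nat \<Rightarrow> real) \<Rightarrow> real" where
  "symmean k n x = root k (esym k n x / real (n choose k))"

definition mpt :: "'a measure \<Rightarrow> ('a \<Rightarrow> 'a) \<Rightarrow> bool" where
  "mpt M T \<longleftrightarrow> T \<in> M \<rightarrow>\<^sub>M M \<and> distr M M T = M"

definition ergodic :: "'a measure \<Rightarrow> ('a \<Rightarrow> 'a) \<Rightarrow> bool" where
  "ergodic M T \<longleftrightarrow> mpt M T \<and>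
     (\<forall>A\<in>sets M. T -` A \<inter> space M = A \<longrightarrow> measure M A = 0 \<or> measure M A = 1)"

end

theory Submission
  imports Defs
begin

lemma det1:
  fixes s :: "nat \<Rightarrow> real"
  assumes up: "\<And>k. \<exists>K::nat. \<forall>n. s n \<le> K + n * (L + 1/(Suc k))"
    and lo: "\<And>k. \<exists>K::nat. \<forall>n. s n \<ge> n * (L - 1/(Suc k)) - K"
  shows "(\<lambda>n. s n / n) \<longlonglongrightarrow> L"
proof (rule LIMSEQ_I)
  fix r :: real assume r: "r > 0"
  obtain k where k: "inverse (real (Suc k)) < r/2" using reals_Archimedean[of "r/2"] r by auto
  obtain K1 :: nat where K1: "\<forall>n. s n \<le> K1 + n * (L + 1/(Suc k))" using up by blast
  obtain K2 :: nat where K2: "\<forall>n. s n \<ge> n * (L - 1/(Suc k)) - K2" using lo by blast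
  define K where "K = real (K1 + K2)"
  obtain N :: nat where N: "real N \<ge> 2 * K / r + 1" using real_arch_simple by blast
  show "\<exists>no. \<forall>n\<ge>no. norm (s n / n - L) < r"
  proof (intro exI allI impI)
    fix n assume n: "N \<le> n"
    have Kn: "K \<ge> 0" unfolding K_def by simp
    have "2 * K / r \<ge> 0" using Kn r by simp
    moreover have "real N \<le> real n" using n by simp
    ultimately have nge: "real n \<ge> 2 * K / r + 1" using N by linarith
    have npos: "real n > 0" using nge \<open>2 * K / r \<ge> 0\<close> by linarith
    have "2 * K / r < n" using nge by linarith
    then have Kr: "K / n < r/2" using npos r by (simp add: field_simps)
    have e1: "n * (L + 1/(Suc k)) = n * L + n / Suc k" by (simp add: algebra_simps)
    have e2: "n * (L - 1/(Suc k)) = n * L - n / Suc k" by (simp add: algebra_simps)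
    have "real K1 \<le> K" "real K2 \<le> K" unfolding K_def by simp_all
    then have b1: "s n - n * L \<le> K + n / Suc k" and b2: "n * L - s n \<le> K + n / Suc k"
      using K1[rule_format, of n] K2[rule_format, of n] e1 e2 by linarith+
    have "\<bar>s n - n * L\<bar> \<le> K + n / Suc k" using b1 b2 by linarith
    then have "\<bar>s n - n * L\<bar> / n \<le> (K + n / Suc k) / n"
      by (rule divide_right_mono) (use npos in auto)
    also have "\<dots> = K / n + 1 / Suc k" using npos by (simp add: field_simps)
    finally have "\<bar>s n - n * L\<bar> / n \<le> K / n + 1 / Suc k" .
    moreover have "\<bar>s n - n * L\<bar> / n = \<bar>s n / n - L\<bar>" using npos
      by (simp add: field_simps abs_div_pos[symmetric] abs_divide)
    ultimately have "\<bar>s n / n - L\<bar> \<le> K / n + 1 / Suc k" by simp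
    also have "\<dots> < r"
    proof -
      have "1 / real (Suc k) < r/2" using k by (simp add: inverse_eq_divide)
      then show ?thesis using Kr by linarith
    qed
    finally show "norm (s n / n - L) < r" by simp
  qed
qed

primrec Mxg :: "(nat \<Rightarrow> 'a \<Rightarrow> real) \<Rightarrow> nat \<Rightarrow> 'a \<Rightarrow> real" where
  "Mxg s 0 x = 0"
| "Mxg s (Suc N) x = max (Mxg s N x) (s (Suc N) x)"

locale ergsetup = prob_space M for M :: "'a measure" +
  fixes T :: "'a \<Rightarrow> 'a"
  assumes erg: "ergodic M T"
begin

lemma mptT: "mpt M T"
  using erg unfolding ergodic_def by (rule conjunct1)

lemma Tmeas[measurable]: "T \<in> M \<rightarrow>\<^sub>M M"
  using mptT unfolding mpt_def by (rule conjunct1)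

lemma Tdistr: "distr M M T = M"
  using mptT unfolding mpt_def by (rule conjunct2)

lemma Tn_meas[measurable]: "(T ^^ n) \<in> M \<rightarrow>\<^sub>M M"
  by (rule measurable_compose_n[OF Tmeas])

lemma Tn_space: "x \<in> space M \<Longrightarrow> (T ^^ n) x \<in> space M"
  by (rule measurable_space[OF Tn_meas])

lemma Tn_distr: "distr M M (T ^^ n) = M"
proof (induction n)
  case 0
  have "T ^^ 0 = (\<lambda>x. x)" by (simp add: id_def)
  then show ?case by (simp only: distr_id)
next
  case (Suc n)
  have e: "T \<circ> T ^^ n = T ^^ Suc n" by simp
  have "distr (distr M M (T ^^ n)) M T = distr M M (T \<circ> T ^^ n)"
    by (rule distr_distr[OF Tmeas Tn_meas])
  then have "distr M M (T ^^ Suc n) = distr (distr M M (T ^^ n)) M T"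
    unfolding e by (rule sym)
  also have "\<dots> = distr M M T" unfolding Suc.IH ..
  also have "\<dots> = M" by (rule Tdistr)
  finally show ?case .
qed

lemma integrable_Tn: "integrable M h \<Longrightarrow> integrable M (\<lambda>x. h ((T ^^ n) x))"
  for h :: "'a \<Rightarrow> real"
  by (metis Tn_distr Tn_meas borel_measurable_integrable integrable_distr_eq)

lemma integral_Tn: "integrable M h \<Longrightarrow> integral\<^sup>L M (\<lambda>x. h ((T ^^ n) x)) = integral\<^sup>L M h"
  for h :: "'a \<Rightarrow> real"
  by (metis Tn_distr Tn_meas borel_measurable_integrable integral_distr)

lemma AE_Tn: assumes "AE x in M. P x" "{x \<in> space M. P x} \<in> sets M"
  shows "AE x in M. P ((T ^^ n) x)"
proof -
  have e: "almost_everywhere (distr M M (T^^n)) P = almost_everywhere M P" by (simp only: Tn_distr)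
  show ?thesis using AE_distr_iff[OF Tn_meas assms(2), of n] assms(1) e by simp
qed

definition S :: "('a \<Rightarrow> real) \<Rightarrow> nat \<Rightarrow> 'a \<Rightarrow> real" where
  "S h n x = (\<Sum>i<n. h ((T ^^ i) x))"

lemma S_0[simp]: "S h 0 x = 0" by (simp add: S_def)

lemma S_Suc: "S h (Suc n) x = h x + S h n (T x)"
  unfolding S_def sum.lessThan_Suc_shift by (simp add: funpow_Suc_right del: funpow.simps)

lemma S_meas[measurable]: "h \<in> borel_measurable M \<Longrightarrow> S h n \<in> borel_measurable M"
  unfolding S_def by (auto intro!: borel_measurable_sum measurable_compose[OF Tn_meas])

lemma S_int: "integrable M h \<Longrightarrow> integrable M (S h n)"
  unfolding S_def by (auto intro!: integrable_Tn)

definition Mx :: "('a \<Rightarrow> real) \<Rightarrow> nat \<Rightarrow> 'a \<Rightarrow> real" where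
  "Mx h = Mxg (S h)"

lemma Mx_simps[simp]: "Mx h 0 x = 0" "Mx h (Suc N) x = max (Mx h N x) (S h (Suc N) x)"
  unfolding Mx_def by simp_all

lemma Mx_nonneg: "Mx h N x \<ge> 0"
  by (induction N) auto

lemma Mx_ge: "k \<le> N \<Longrightarrow> S h k x \<le> Mx h N x"
proof (induction N)
  case 0 then show ?case by simp
next
  case (Suc N) then show ?case by (cases "k = Suc N") auto
qed

lemma Mx_att: "\<exists>k\<le>N. Mx h N x = S h k x"
proof (induction N)
  case 0 then show ?case by (intro exI[of _ 0]) simp
next
  case (Suc N)
  then obtain k where "k \<le> N" "Mx h N x = S h k x" by auto
  then show ?case
    by (cases "Mx h N x \<le> S h (Suc N) x") (auto intro: exI[of _ "Suc N"] exI[of _ k] simp: max_def)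
qed

lemma Mx_key: assumes "Mx h N x > 0" shows "Mx h N x \<le> h x + Mx h N (T x)"
proof -
  obtain k where k: "k \<le> N" "Mx h N x = S h k x" using Mx_att by blast
  with assms obtain j where j: "k = Suc j" by (cases k) auto
  have "S h j (T x) \<le> Mx h N (T x)" using k j by (intro Mx_ge) simp
  then show ?thesis using k j S_Suc by simp
qed

lemma Mx_int: "integrable M h \<Longrightarrow> integrable M (Mx h N)"
proof (induction N)
  case 0
  have "Mx h 0 = (\<lambda>x. 0)" by auto
  then show ?case by simp
next
  case (Suc N)
  have "Mx h (Suc N) = (\<lambda>x. max (Mx h N x) (S h (Suc N) x))" by auto
  then show ?case using Suc S_int[OF Suc(2)] by (simp add: Bochner_Integration.integrable_max)
qed

lemma maximal:
  assumes h: "integrable M h"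
  shows "integral\<^sup>L M (\<lambda>x. if Mx h N x > 0 then h x else 0) \<ge> 0"
proof -
  have hm[measurable]: "h \<in> borel_measurable M" using h by auto
  have mm[measurable]: "Mx h N \<in> borel_measurable M" using Mx_int[OF h] by auto
  have i1: "integrable M (\<lambda>x. if Mx h N x > 0 then h x else 0)"
    by (rule Bochner_Integration.integrable_bound[OF h]) auto
  have i2: "integrable M (\<lambda>x. Mx h N (T x))"
    using integrable_Tn[OF Mx_int[OF h], where n=1] by simp
  have e2: "integral\<^sup>L M (\<lambda>x. Mx h N (T x)) = integral\<^sup>L M (Mx h N)"
    using integral_Tn[OF Mx_int[OF h], where n=1] by simp
  have "0 = integral\<^sup>L M (\<lambda>x. Mx h N x - Mx h N (T x))"
    using e2 i2 Mx_int[OF h] by simp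
  also have "\<dots> \<le> integral\<^sup>L M (\<lambda>x. if Mx h N x > 0 then h x else 0)"
  proof (rule integral_mono)
    show "integrable M (\<lambda>x. Mx h N x - Mx h N (T x))" using i2 Mx_int[OF h] by auto
    show "integrable M (\<lambda>x. if Mx h N x > 0 then h x else 0)" by (rule i1)
    fix x
    show "Mx h N x - Mx h N (T x) \<le> (if Mx h N x > 0 then h x else 0)"
      using Mx_key[of h N x] Mx_nonneg[of h N x] Mx_nonneg[of h N "T x"] by auto
  qed
  finally show ?thesis .
qed

lemma core:
  assumes h: "integrable M h" and neg: "integral\<^sup>L M h < 0"
  shows "AE x in M. \<exists>K::nat. \<forall>n. S h n x \<le> K"
proof -
  have hm[measurable]: "h \<in> borel_measurable M" using h by auto
  define B where "B = {x \<in> space M. \<forall>K::nat. \<exists>n. S h n x > K}"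
  have Bs: "B \<in> sets M" unfolding B_def by measurable
  have inv: "T -` B \<inter> space M = B"
  proof (intro equalityI subsetI)
    fix x assume x: "x \<in> T -` B \<inter> space M"
    have "\<exists>n. S h n x > K" for K :: nat
    proof -
      obtain K' :: nat where K': "real K' \<ge> K - h x" using real_arch_simple by blast
      obtain n where "S h n (T x) > K'" using x unfolding B_def by auto
      then have "S h (Suc n) x > K" using K' S_Suc[of h n x] by simp
      then show ?thesis by blast
    qed
    then show "x \<in> B" using x unfolding B_def by auto
  next
    fix x assume x: "x \<in> B"
    have "\<exists>n. S h n (T x) > K" for K :: nat
    proof -
      obtain K' :: nat where K': "real K' \<ge> K + \<bar>h x\<bar>" using real_arch_simple by blast
      obtain n where n: "S h n x > K'" using x unfolding B_def by auto
      then obtain j where j: "n = Suc j" by (cases n) auto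
      then have "S h j (T x) > K" using K' n S_Suc[of h j x] by simp
      then show ?thesis by blast
    qed
    moreover have "T x \<in> space M" using x measurable_space[OF Tmeas] unfolding B_def by auto
    ultimately show "x \<in> T -` B \<inter> space M" using x unfolding B_def by auto
  qed
  have "measure M B = 0 \<or> measure M B = 1" using erg Bs inv unfolding ergodic_def by blast
  moreover have "measure M B \<noteq> 1"
  proof
    assume "measure M B = 1"
    then have AEB: "AE x in M. x \<in> B"
      using Bs by (simp add: prob_space.AE_prob_1 prob_space_axioms)
    define s where "s N x = (if Mx h N x > 0 then h x else 0)" for N x
    have "(\<lambda>N. integral\<^sup>L M (s N)) \<longlonglongrightarrow> integral\<^sup>L M h"
    proof (rule integral_dominated_convergence[where w="\<lambda>x. norm (h x)"])
      show "h \<in> borel_measurable M" by simp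
      show "s N \<in> borel_measurable M" for N
        using Mx_int[OF h, of N] unfolding s_def by measurable
      show "integrable M (\<lambda>x. norm (h x))" using h by auto
      show "AE x in M. norm (s N x) \<le> norm (h x)" for N unfolding s_def by auto
      show "AE x in M. (\<lambda>N. s N x) \<longlonglongrightarrow> h x"
        using AEB
      proof eventually_elim
        case (elim x)
        then have "\<exists>n. S h n x > real (0::nat)" unfolding B_def by blast
        then obtain n where n: "S h n x > 0" by auto
        have "eventually (\<lambda>N. s N x = h x) sequentially"
          unfolding eventually_sequentially
        proof (intro exI allI impI)
          fix N assume "N \<ge> n"
          then have "Mx h N x > 0" using Mx_ge[of n N h x] n by simp
          then show "s N x = h x" unfolding s_def by simp
        qed
        then show ?case by (rule tendsto_eventually)
      qed
    qed
    moreover have "\<And>N. integral\<^sup>L M (s N) \<ge> 0" unfolding s_def by (rule maximal[OF h])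
    ultimately have "integral\<^sup>L M h \<ge> 0" by (simp add: LIMSEQ_le_const)
    then show False using neg by simp
  qed
  ultimately have "measure M B = 0" by simp
  then have "B \<in> null_sets M" using Bs by (simp add: emeasure_eq_measure null_sets_def)
  from AE_not_in[OF this] AE_space show ?thesis
  proof eventually_elim
    case (elim x)
    then show ?case unfolding B_def by (simp add: not_less)
  qed
qed


lemma S_lin: "S (\<lambda>x. g x - c) n x = S g n x - n * c"
  unfolding S_def by (induction n) (simp_all add: algebra_simps)

lemma S_lin2: "S (\<lambda>x. c - g x) n x = n * c - S g n x"
  unfolding S_def by (induction n) (simp_all add: algebra_simps)

lemma birkhoff:
  assumes g: "integrable M g"
  shows "AE x in M. (\<lambda>n. S g n x / n) \<longlonglongrightarrow> integral\<^sup>L M g"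
proof -
  let ?L = "integral\<^sup>L M g"
  have A1: "AE x in M. \<exists>K::nat. \<forall>n. S g n x \<le> K + n * (?L + 1/(Suc k))" for k
  proof -
    let ?c = "?L + 1/(Suc k)"
    have i: "integrable M (\<lambda>x. g x - ?c)" using g by auto
    have "integral\<^sup>L M (\<lambda>x. g x - ?c) < 0" using g prob_space by (simp add: prob_space)
    from core[OF i this] show ?thesis
    proof eventually_elim
      case (elim x)
      then obtain K :: nat where K: "\<forall>n. S (\<lambda>x. g x - ?c) n x \<le> K" by blast
      have "\<forall>n. S g n x \<le> K + n * ?c"
      proof
        fix n
        have "S (\<lambda>x. g x - ?c) n x = S g n x - n * ?c" by (rule S_lin)
        then show "S g n x \<le> K + n * ?c" using K[rule_format, of n] by linarith
      qed
      then show ?case by blast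
    qed
  qed
  have A2: "AE x in M. \<exists>K::nat. \<forall>n. S g n x \<ge> n * (?L - 1/(Suc k)) - K" for k
  proof -
    let ?c = "?L - 1/(Suc k)"
    have i: "integrable M (\<lambda>x. ?c - g x)" using g by auto
    have "integral\<^sup>L M (\<lambda>x. ?c - g x) < 0" using g prob_space by (simp add: prob_space)
    from core[OF i this] show ?thesis
    proof eventually_elim
      case (elim x)
      then obtain K :: nat where K: "\<forall>n. S (\<lambda>x. ?c - g x) n x \<le> K" by blast
      have "\<forall>n. S g n x \<ge> n * ?c - K"
      proof
        fix n
        have "S (\<lambda>x. ?c - g x) n x = n * ?c - S g n x" by (rule S_lin2)
        then show "S g n x \<ge> n * ?c - K" using K[rule_format, of n] by linarith
      qed
      then show ?case by blast
    qed
  qed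
  have B1: "AE x in M. \<forall>k. \<exists>K::nat. \<forall>n. S g n x \<le> K + n * (?L + 1/(Suc k))"
    unfolding AE_all_countable using A1 by blast
  have B2: "AE x in M. \<forall>k. \<exists>K::nat. \<forall>n. S g n x \<ge> n * (?L - 1/(Suc k)) - K"
    unfolding AE_all_countable using A2 by blast
  from B1 B2 show ?thesis
  proof eventually_elim
    case (elim x)
    show ?case
    proof (rule det1)
      fix k
      show "\<exists>K::nat. \<forall>n. S g n x \<le> K + n * (?L + 1/(Suc k))" using elim(1) by blast
      show "\<exists>K::nat. \<forall>n. S g n x \<ge> n * (?L - 1/(Suc k)) - K" using elim(2) by blast
    qed
  qed
qed

end

lemma esym_0[simp]: "esym 0 n x = 1"
proof -
  have "{S. S \<subseteq> {..<n} \<and> card S = 0} = {{}}"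
    by (auto dest: finite_subset)
  then show ?thesis by (simp add: esym_def)
qed

lemma esym_Suc_0[simp]: "esym (Suc k) 0 x = 0"
proof -
  have "{S. S \<subseteq> {..<0::nat} \<and> card S = Suc k} = {}" by auto
  then show ?thesis by (simp add: esym_def)
qed

lemma esym_rec: "esym (Suc k) (Suc n) x = esym (Suc k) n x + x n * esym k n x"
proof -
  let ?A = "{S. S \<subseteq> {..<Suc n} \<and> card S = Suc k}"
  let ?B = "{S. S \<subseteq> {..<n} \<and> card S = Suc k}"
  let ?C = "{S. S \<subseteq> {..<n} \<and> card S = k}"
  have split: "?A = ?B \<union> insert n ` ?C"
  proof (intro equalityI subsetI)
    fix S assume S: "S \<in> ?A"
    have fS: "finite S" using S finite_subset by blast
    show "S \<in> ?B \<union> insert n ` ?C"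
    proof (cases "n \<in> S")
      case True
      have "S = insert n (S - {n})" using True by auto
      moreover have "S - {n} \<in> ?C" using S True fS by (auto simp: card_Diff_singleton)
      ultimately show ?thesis by blast
    next
      case False
      then have "S \<subseteq> {..<n}" using S by (auto simp: less_Suc_eq)
      then show ?thesis using S by auto
    qed
  next
    fix S assume "S \<in> ?B \<union> insert n ` ?C"
    then show "S \<in> ?A"
    proof
      assume "S \<in> ?B" then show ?thesis by auto
    next
      assume "S \<in> insert n ` ?C"
      then obtain T where T: "T \<in> ?C" "S = insert n T" by auto
      have "finite T" using T finite_subset by blast
      moreover have "n \<notin> T" using T by auto
      ultimately show ?thesis using T by auto
    qed
  qed
  have disj: "?B \<inter> insert n ` ?C = {}" by auto
  have finB: "finite ?B" by (rule finite_subset[of _ "Pow {..<n}"]) auto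
  have finC: "finite ?C" by (rule finite_subset[of _ "Pow {..<n}"]) auto
  have inj: "inj_on (insert n) ?C"
  proof (rule inj_onI)
    fix S T assume "S \<in> ?C" "T \<in> ?C" "insert n S = insert n T"
    moreover have "n \<notin> S" "n \<notin> T" using \<open>S \<in> ?C\<close> \<open>T \<in> ?C\<close> by auto
    ultimately show "S = T" by (simp add: insert_ident)
  qed
  have "esym (Suc k) (Suc n) x = (\<Sum>S\<in>?B. prod x S) + (\<Sum>S\<in>insert n ` ?C. prod x S)"
    unfolding esym_def split using finB finC disj by (intro sum.union_disjoint) auto
  also have "(\<Sum>S\<in>insert n ` ?C. prod x S) = (\<Sum>T\<in>?C. prod x (insert n T))"
    using inj by (simp add: sum.reindex)
  also have "\<dots> = (\<Sum>T\<in>?C. x n * prod x T)"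
  proof (rule sum.cong)
    fix T assume T: "T \<in> ?C"
    have "finite T" using T finite_subset by blast
    moreover have "n \<notin> T" using T by auto
    ultimately show "prod x (insert n T) = x n * prod x T" by simp
  qed simp
  finally show ?thesis by (simp add: esym_def sum_distrib_left)
qed

lemma esym_1: "esym 1 n x = (\<Sum>i<n. x i)"
  by (induction n) (simp_all add: esym_rec[where k=0, simplified])

lemma esym_nonneg: "(\<And>i. x i \<ge> 0) \<Longrightarrow> esym k n x \<ge> 0"
  unfolding esym_def by (intro sum_nonneg prod_nonneg) auto

lemma esym_mono: "(\<And>i. 0 \<le> y i) \<Longrightarrow> (\<And>i. y i \<le> x i) \<Longrightarrow> esym k n y \<le> esym k n x"
  unfolding esym_def by (intro sum_mono prod_mono) auto

lemma bern: fixes a b :: real assumes "a \<ge> 0" "b \<ge> 0"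
  shows "a ^ Suc j + Suc j * b * a ^ j \<le> (a + b) ^ Suc j"
proof (induction j)
  case 0 then show ?case by simp
next
  case (Suc j)
  have "a ^ Suc (Suc j) + Suc (Suc j) * b * a ^ Suc j
      \<le> (a + b) * (a ^ Suc j + Suc j * b * a ^ j)"
    using assms by (simp add: algebra_simps)
  also have "\<dots> \<le> (a + b) * (a + b) ^ Suc j"
    using Suc assms by (intro mult_left_mono) auto
  finally show ?case by simp
qed

lemma esym_upper: assumes "\<And>i. x i \<ge> 0"
  shows "fact k * esym k n x \<le> (\<Sum>i<n. x i) ^ k"
proof (induction n arbitrary: k)
  case 0 then show ?case by (cases k) auto
next
  case (Suc n)
  show ?case
  proof (cases k)
    case 0 then show ?thesis by simp
  next
    case (Suc j)
    let ?P = "\<Sum>i<n. x i"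
    have P0: "?P \<ge> 0" using assms by (simp add: sum_nonneg)
    have "fact k * esym k (Suc n) x = fact (Suc j) * esym (Suc j) n x + Suc j * x n * (fact j * esym j n x)"
      using Suc by (simp add: esym_rec algebra_simps)
    also have "\<dots> \<le> ?P ^ Suc j + Suc j * x n * ?P ^ j"
      using Suc.IH[of "Suc j"] Suc.IH[of j] assms[of n]
      by (intro add_mono mult_left_mono) auto
    also have "\<dots> \<le> (?P + x n) ^ Suc j" using bern[OF P0 assms[of n]] by simp
    finally show ?thesis using Suc by simp
  qed
qed

lemma esym_key: assumes "\<And>i. x i \<ge> 0" "\<And>i. x i \<le> K"
  shows "(Suc k) * esym (Suc k) n x \<ge> ((\<Sum>i<n. x i) - k * K) * esym k n x"
proof (induction n arbitrary: k)
  case 0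
  have "K \<ge> 0" using assms[of 0] by linarith
  then show ?case using esym_nonneg[OF assms(1), of k 0] by (simp add: mult_nonneg_nonneg)
next
  case (Suc n)
  let ?P = "\<Sum>i<n. x i"
  show ?case
  proof (cases k)
    case 0 then show ?thesis using esym_1[of "Suc n" x] by simp
  next
    case (Suc j)
    let ?x = "x n"
    have x0: "?x \<ge> 0" and xK: "?x \<le> K" using assms by auto
    have Ej: "esym j n x \<ge> 0" by (intro esym_nonneg assms(1))
    have IH1: "(Suc (Suc j)) * esym (Suc (Suc j)) n x \<ge> (?P - Suc j * K) * esym (Suc j) n x"
      using Suc.IH[of "Suc j"] .
    have IH2: "(Suc j) * esym (Suc j) n x \<ge> (?P - j * K) * esym j n x"
      using Suc.IH[of j] .
    have s1: "?x * ((?P + ?x - Suc j * K) * esym j n x) \<le> ?x * ((?P - j * K) * esym j n x)"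
      using x0 xK Ej by (intro mult_left_mono mult_right_mono) (auto simp: algebra_simps)
    have s2: "?x * ((?P - j * K) * esym j n x) \<le> ?x * (Suc j * esym (Suc j) n x)"
      using x0 IH2 by (intro mult_left_mono) auto
    have "((\<Sum>i<Suc n. x i) - k * K) * esym k (Suc n) x
        = (?P - Suc j * K) * esym (Suc j) n x + ?x * esym (Suc j) n x
          + ?x * ((?P + ?x - Suc j * K) * esym j n x)"
      using Suc by (simp add: esym_rec algebra_simps)
    also have "\<dots> \<le> (Suc (Suc j)) * esym (Suc (Suc j)) n x + ?x * esym (Suc j) n x
          + ?x * (Suc j * esym (Suc j) n x)"
      using IH1 s1 s2 by linarith
    also have "\<dots> = (Suc k) * esym (Suc k) (Suc n) x"
      using Suc by (simp add: esym_rec algebra_simps)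
    finally show ?thesis .
  qed
qed

lemma esym_lower: fixes x :: "nat \<Rightarrow> real" and K :: real and k n :: nat
  assumes "\<And>i. x i \<ge> 0" "\<And>i. x i \<le> K"
  shows "fact k * esym k n x \<ge> (\<Prod>j<k. max 0 ((\<Sum>i<n. x i) - real j * K))"
proof (induction k)
  case 0
  have "(\<Prod>j<0. max 0 ((\<Sum>i<n. x i) - real j * K)) = 1" by simp
  then show ?case by simp
next
  case (Suc k)
  let ?P = "\<Sum>i<n. x i"
  let ?Q = "\<Prod>j<k. max 0 (?P - real j * K)"
  have Q0: "?Q \<ge> 0" by (intro prod_nonneg) auto
  have E0: "esym (Suc k) n x \<ge> 0" "esym k n x \<ge> 0" by (intro esym_nonneg assms(1))+
  show ?case
  proof (cases "?P - k * K \<ge> 0")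
    case True
    have "(\<Prod>j<Suc k. max 0 (?P - real j * K)) = (?P - k * K) * ?Q" using True by simp
    also have "\<dots> \<le> (?P - k * K) * (fact k * esym k n x)"
      using True Suc.IH by (intro mult_left_mono) auto
    also have "\<dots> \<le> fact k * ((Suc k) * esym (Suc k) n x)"
    proof -
      have "(Suc k) * esym (Suc k) n x \<ge> (?P - k*K) * esym k n x"
        by (rule esym_key) (use assms in auto)
      then show ?thesis by (simp add: mult_left_mono)
    qed
    also have "\<dots> = fact (Suc k) * esym (Suc k) n x" by (simp add: algebra_simps)
    finally show ?thesis .
  next
    case False
    then have m0: "max 0 (?P - real k * K) = 0" by simp
    have "(\<Prod>j<Suc k. max 0 (?P - real j * K)) = ?Q * max 0 (?P - real k * K)"
      by (simp only: prod.lessThan_Suc)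
    then have "(\<Prod>j<Suc k. max 0 (?P - real j * K)) = 0" using m0 by simp
    moreover have "fact (Suc k) * esym (Suc k) n x \<ge> 0" using E0 by simp
    ultimately show ?thesis by linarith
  qed
qed

lemma fact_choose: "real (fact m) * real (n choose m) = (\<Prod>j<m. real n - real j)"
proof -
  have "real (n choose m) = real n gchoose m" by (rule binomial_gbinomial)
  moreover have "fact m * (real n gchoose m) = (\<Prod>j<m. real n - real j)"
    using gbinomial_mult_fact[of m "real n"] by (simp add: atLeast0LessThan)
  ultimately show ?thesis by simp
qed

definition qq :: "nat \<Rightarrow> nat \<Rightarrow> real" where
  "qq m n = (\<Prod>j<m. 1 - real j / real n)"

lemma qq_lim: "(\<lambda>n. qq m n) \<longlonglongrightarrow> 1"
proof -
  have "(\<lambda>n. \<Prod>j<m. 1 - real j / real n) \<longlonglongrightarrow> (\<Prod>j<m. 1 - 0)"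
    by (intro tendsto_prod tendsto_diff tendsto_const lim_const_over_n)
  then show ?thesis unfolding qq_def by simp
qed

lemma qq_pos: "m \<le> n \<Longrightarrow> 0 < n \<Longrightarrow> qq m n > 0"
  unfolding qq_def by (intro prod_pos) (auto simp: field_simps)

lemma qq_le1: "m \<le> n \<Longrightarrow> 0 < n \<Longrightarrow> qq m n \<le> 1"
  unfolding qq_def by (intro prod_le_1) (auto simp: field_simps)

lemma D_eq: assumes "0 < n" "m \<le> n"
  shows "real (n choose m) = real n ^ m * qq m n / fact m"
proof -
  have "(\<Prod>j<m. real n - real j) = (\<Prod>j<m. real n * (1 - real j / real n))"
    using assms by (intro prod.cong) (auto simp: field_simps)
  also have "\<dots> = real n ^ m * qq m n" unfolding qq_def by (simp add: prod.distrib)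
  finally show ?thesis using fact_choose[of m n] by (simp add: field_simps)
qed

lemma ratio_eq: assumes "0 < n" "m \<le> n"
  shows "esym m n z / real (n choose m) = fact m * esym m n z / (real n ^ m * qq m n)"
proof -
  have C: "real (n choose m) > 0" using assms by simp
  have f: "(fact m :: real) > 0" by simp
  have "real n ^ m * qq m n = fact m * real (n choose m)" using D_eq[OF assms] f by (simp add: field_simps)
  then show ?thesis using C f by (simp add: field_simps)
qed

lemma parta_det:
  fixes x :: "nat \<Rightarrow> real" and mu :: real and muK :: "nat \<Rightarrow> real"
  assumes m: "m > 0" and x0: "\<And>i. x i \<ge> 0"
    and mean: "(\<lambda>n. (\<Sum>i<n. x i) / n) \<longlonglongrightarrow> mu"
    and meanK: "\<And>K. (\<lambda>n. (\<Sum>i<n. min (x i) (real K)) / n) \<longlonglongrightarrow> muK K"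
    and muK: "muK \<longlonglongrightarrow> mu"
  shows "(\<lambda>n. symmean m n x) \<longlonglongrightarrow> mu"
proof -
  have mu0: "mu \<ge> 0"
    by (rule LIMSEQ_le_const[OF mean]) (auto intro!: divide_nonneg_nonneg sum_nonneg x0)
  have muK0: "muK K \<ge> 0" for K
    by (rule LIMSEQ_le_const[OF meanK]) (auto intro!: divide_nonneg_nonneg sum_nonneg x0)
  define up where "up n = root m (((\<Sum>i<n. x i) / n) ^ m / qq m n)" for n
  have up_lim: "up \<longlonglongrightarrow> mu"
  proof -
    have "up \<longlonglongrightarrow> root m (mu ^ m / 1)"
      unfolding up_def by (intro tendsto_real_root tendsto_divide tendsto_power mean qq_lim) auto
    then show ?thesis using real_root_power_cancel[OF m mu0] by simp
  qed
  have up_bd: "symmean m n x \<le> up n" if n: "m \<le> n" for n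
  proof -
    have n0: "0 < n" using n m by simp
    have q: "qq m n > 0" using qq_pos[OF n n0] .
    have "esym m n x / real (n choose m) = fact m * esym m n x / (real n ^ m * qq m n)"
      by (rule ratio_eq[OF n0 n])
    also have "\<dots> \<le> (\<Sum>i<n. x i) ^ m / (real n ^ m * qq m n)"
      using esym_upper[of x m n] x0 q n0 by (intro divide_right_mono) auto
    also have "\<dots> = ((\<Sum>i<n. x i) / n) ^ m / qq m n" by (simp add: power_divide field_simps)
    finally show ?thesis unfolding symmean_def up_def using m by simp
  qed
  define lo where "lo K n = root m (\<Prod>j<m. max 0 ((\<Sum>i<n. min (x i) (real K)) / n - real j * K / n))"
    for K :: nat and n
  have lo_lim: "lo K \<longlonglongrightarrow> muK K" for K
  proof -
    have "lo K \<longlonglongrightarrow> root m (\<Prod>j<m. max 0 (muK K - 0))"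
      unfolding lo_def
      by (intro tendsto_real_root tendsto_prod tendsto_max tendsto_diff tendsto_const meanK lim_const_over_n)
    then show ?thesis using real_root_power_cancel[OF m muK0] by (simp add: muK0)
  qed
  have lo_bd: "lo K n \<le> symmean m n x" if n: "m \<le> n" for n K
  proof -
    have n0: "0 < n" using n m by simp
    have q: "qq m n > 0" using qq_pos[OF n n0] .
    have q1: "qq m n \<le> 1" using qq_le1[OF n n0] .
    let ?y = "\<lambda>i. min (x i) (real K)"
    let ?Q = "\<Prod>j<m. max 0 ((\<Sum>i<n. ?y i) - real j * K)"
    have Q0: "?Q \<ge> 0" by (intro prod_nonneg) auto
    have "(\<Prod>j<m. max 0 ((\<Sum>i<n. ?y i) / n - real j * K / n)) = (\<Prod>j<m. max 0 ((\<Sum>i<n. ?y i) - real j * K) / n)"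
      using n0 by (intro prod.cong) (auto simp: max_def field_simps)
    also have "\<dots> = ?Q / real n ^ m" by (simp add: prod_dividef)
    also have "\<dots> \<le> ?Q / (real n ^ m * qq m n)"
      using Q0 q q1 n0 by (intro divide_left_mono) (auto intro!: mult_pos_pos mult_left_le)
    also have "\<dots> \<le> fact m * esym m n ?y / (real n ^ m * qq m n)"
    proof -
      have "?Q \<le> fact m * esym m n ?y"
        by (rule esym_lower) (auto simp: x0)
      moreover have "real n ^ m * qq m n \<ge> 0" using q n0 by simp
      ultimately show ?thesis by (rule divide_right_mono)
    qed
    also have "\<dots> = esym m n ?y / real (n choose m)" by (rule ratio_eq[OF n0 n, symmetric])
    also have "\<dots> \<le> esym m n x / real (n choose m)"
      using x0 by (intro divide_right_mono esym_mono) auto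
    finally show ?thesis unfolding symmean_def lo_def using m by simp
  qed
  show ?thesis
  proof (rule order_tendstoI)
    fix a assume a: "a < mu"
    have "eventually (\<lambda>K. a < muK K) sequentially" by (rule order_tendstoD(1)[OF muK a])
    then obtain N where "\<forall>K\<ge>N. a < muK K" unfolding eventually_sequentially by blast
    then have K: "a < muK N" by simp
    have "eventually (\<lambda>n. a < lo N n) sequentially" by (rule order_tendstoD(1)[OF lo_lim K])
    moreover have "eventually (\<lambda>n. m \<le> n) sequentially" by (rule eventually_ge_at_top)
    ultimately show "eventually (\<lambda>n. a < symmean m n x) sequentially"
    proof eventually_elim
      case (elim n) then show ?case using lo_bd[of n N] by linarith
    qed
  next
    fix a assume a: "mu < a"
    have "eventually (\<lambda>n. up n < a) sequentially" by (rule order_tendstoD(2)[OF up_lim a])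
    moreover have "eventually (\<lambda>n. m \<le> n) sequentially" by (rule eventually_ge_at_top)
    ultimately show "eventually (\<lambda>n. symmean m n x < a) sequentially"
    proof eventually_elim
      case (elim n) then show ?case using up_bd[of n] by linarith
    qed
  qed
qed

definition Lam :: "(nat \<Rightarrow> real) \<Rightarrow> nat \<Rightarrow> real" where
  "Lam a n = Max (insert 0 ((\<lambda>i. \<bar>a i\<bar>) ` {..<n}))"

lemma Lam_nonneg: "Lam a n \<ge> 0"
  unfolding Lam_def by (rule Max_ge) auto

lemma Lam_ge: "i < n \<Longrightarrow> \<bar>a i\<bar> \<le> Lam a n"
  unfolding Lam_def by (rule Max_ge) auto

lemma Lam_le: "B \<ge> 0 \<Longrightarrow> (\<And>i. i < n \<Longrightarrow> \<bar>a i\<bar> \<le> B) \<Longrightarrow> Lam a n \<le> B"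
  unfolding Lam_def by (subst Max_le_iff) auto

lemma maxlemma:
  fixes a :: "nat \<Rightarrow> real"
  assumes mean: "(\<lambda>n. (\<Sum>i<n. a i) / n) \<longlonglongrightarrow> L"
  shows "(\<lambda>n. Lam a n / n) \<longlonglongrightarrow> 0"
proof -
  have eq: "a n / real (Suc n) = (\<Sum>i<Suc n. a i) / real (Suc n) - (real n / real (Suc n)) * ((\<Sum>i<n. a i) / n)" for n
  proof (cases "n = 0")
    case True then show ?thesis by simp
  next
    case False
    have "(real n / real (Suc n)) * ((\<Sum>i<n. a i) / n) = (real n * (\<Sum>i<n. a i)) / (real n * real (Suc n))"
      by (simp only: times_divide_times_eq mult.commute)
    also have "\<dots> = (\<Sum>i<n. a i) / real (Suc n)" using False by simp
    finally have "(real n / real (Suc n)) * ((\<Sum>i<n. a i) / n) = (\<Sum>i<n. a i) / real (Suc n)" .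
    moreover have "(\<Sum>i<Suc n. a i) / real (Suc n) = (\<Sum>i<n. a i) / real (Suc n) + a n / real (Suc n)"
      by (simp add: add_divide_distrib)
    ultimately show ?thesis by linarith
  qed
  have ms: "(\<lambda>n. (\<Sum>i<Suc n. a i) / real (Suc n)) \<longlonglongrightarrow> L"
    by (rule LIMSEQ_Suc[OF mean])
  have "(\<lambda>n. (\<Sum>i<Suc n. a i) / real (Suc n) - (real n / real (Suc n)) * ((\<Sum>i<n. a i) / n)) \<longlonglongrightarrow> L - 1 * L"
    by (intro tendsto_diff tendsto_mult LIMSEQ_n_over_Suc_n mean ms)
  then have a1: "(\<lambda>n. a n / real (Suc n)) \<longlonglongrightarrow> 0" unfolding eq[symmetric] by simp
  show ?thesis
  proof (rule LIMSEQ_I)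
    fix r :: real assume r: "r > 0"
    obtain N where N: "\<forall>n\<ge>N. norm (a n / real (Suc n) - 0) < r/2"
      using LIMSEQ_D[OF a1, of "r/2"] r by auto
    define M0 where "M0 = Lam a N"
    have M00: "M0 \<ge> 0" unfolding M0_def by (rule Lam_nonneg)
    obtain N' :: nat where N': "real N' \<ge> 2 * M0 / r + 1" using real_arch_simple by blast
    show "\<exists>no. \<forall>n\<ge>no. norm (Lam a n / real n - 0) < r"
    proof (intro exI[of _ "max N N'"] allI impI)
      fix n assume n: "max N N' \<le> n"
      have "2 * M0 / r \<ge> 0" using M00 r by simp
      moreover have "real N' \<le> real n" using n by simp
      ultimately have nge: "real n \<ge> 2 * M0 / r + 1" using N' by linarith
      have npos: "real n > 0" using nge \<open>2 * M0 / r \<ge> 0\<close> by linarith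
      have Mr: "M0 / n < r / 2"
      proof -
        have "2 * M0 / r < n" using nge by linarith
        then show ?thesis using npos r by (simp add: field_simps)
      qed
      have bd: "Lam a n \<le> M0 + r/2 * n"
      proof (rule Lam_le)
        show "0 \<le> M0 + r / 2 * real n" using M00 r npos by simp
        fix i assume i: "i < n"
        show "\<bar>a i\<bar> \<le> M0 + r / 2 * real n"
        proof (cases "i < N")
          case True
          then have "\<bar>a i\<bar> \<le> M0" unfolding M0_def by (rule Lam_ge)
          moreover have "r/2 * real n \<ge> 0" using r npos by simp
          ultimately show ?thesis by linarith
        next
          case False
          then have "N \<le> i" by simp
          then have "norm (a i / real (Suc i) - 0) < r/2" using N by blast
          then have "\<bar>a i\<bar> / real (Suc i) < r/2" by (simp add: abs_divide)
          then have "\<bar>a i\<bar> < r/2 * real (Suc i)" by (simp add: divide_less_eq)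
          moreover have "real (Suc i) \<le> real n" using i by simp
          moreover have "r/2 * real (Suc i) \<le> r/2 * real n"
            using \<open>real (Suc i) \<le> real n\<close> r by (intro mult_left_mono) auto
          ultimately have "\<bar>a i\<bar> \<le> r/2 * real n" by linarith
          then show ?thesis using M00 by linarith
        qed
      qed
      have "Lam a n / n \<le> (M0 + r/2 * n) / n" using bd npos by (simp add: divide_right_mono)
      also have "\<dots> = M0 / n + r/2" using npos by (simp add: field_simps)
      finally have "Lam a n / n < r" using Mr by linarith
      then show "norm (Lam a n / real n - 0) < r" using Lam_nonneg[of a n] npos by simp
    qed
  qed
qed

lemma root_exp: "0 < r \<Longrightarrow> root r (exp t) = exp (t / r)"
  by (simp add: root_powr_inverse powr_def)

lemma partb_bounds:
  fixes x :: "nat \<Rightarrow> real"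
  assumes xpos: "\<And>i. x i > 0" and n: "m < n"
  shows "exp (((\<Sum>i<n. ln (x i)) - m * Lam (\<lambda>i. ln (x i)) n) / (real n - real m)) \<le> symmean (n - m) n x"
    and "symmean (n - m) n x \<le> exp (((\<Sum>i<n. ln (x i)) + m * Lam (\<lambda>i. ln (x i)) n) / (real n - real m))"
proof -
  let ?a = "\<lambda>i. ln (x i)"
  let ?A = "\<Sum>i<n. ?a i"
  let ?L = "Lam ?a n"
  let ?r = "n - m"
  let ?I = "{S. S \<subseteq> {..<n} \<and> card S = ?r}"
  have r0: "0 < ?r" using n by simp
  have cardI: "card ?I = n choose ?r" using n_subsets[of "{..<n}" ?r] by simp
  have Cpos: "real (n choose ?r) > 0" using n by simp
  have tm: "exp (?A - m * ?L) \<le> prod x S \<and> prod x S \<le> exp (?A + m * ?L)" if S: "S \<in> ?I" for S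
  proof -
    have Ssub: "S \<subseteq> {..<n}" using S by auto
    have fS: "finite S" using Ssub finite_subset by blast
    have pe: "prod x S = exp (\<Sum>i\<in>S. ?a i)"
      using fS xpos by (simp add: exp_sum)
    have sd: "(\<Sum>i\<in>S. ?a i) = ?A - (\<Sum>i\<in>{..<n} - S. ?a i)"
      using Ssub by (simp add: sum_diff)
    have cd: "card ({..<n} - S) = m" using S n fS by (simp add: card_Diff_subset)
    have "\<bar>\<Sum>i\<in>{..<n} - S. ?a i\<bar> \<le> (\<Sum>i\<in>{..<n} - S. \<bar>?a i\<bar>)" by (rule sum_abs)
    also have "\<dots> \<le> real (card ({..<n} - S)) * ?L"
      by (rule sum_bounded_above) (auto intro: Lam_ge)
    finally have "\<bar>\<Sum>i\<in>{..<n} - S. ?a i\<bar> \<le> m * ?L" using cd by simp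
    then have h1: "(\<Sum>i\<in>{..<n} - S. ?a i) \<le> m * ?L" and h2: "- (\<Sum>i\<in>{..<n} - S. ?a i) \<le> m * ?L"
      by (auto simp: abs_le_iff)
    have "?A - m * ?L \<le> ?A - (\<Sum>i\<in>{..<n} - S. ?a i)" "?A - (\<Sum>i\<in>{..<n} - S. ?a i) \<le> ?A + m * ?L"
      using h1 h2 by linarith+
    then show ?thesis unfolding pe sd by simp
  qed
  have E: "esym ?r n x = (\<Sum>S\<in>?I. prod x S)" unfolding esym_def by simp
  have lo: "real (card ?I) * exp (?A - m * ?L) \<le> esym ?r n x"
    unfolding E by (rule sum_bounded_below) (use tm in blast)
  have hi: "esym ?r n x \<le> real (card ?I) * exp (?A + m * ?L)"
    unfolding E by (rule sum_bounded_above) (use tm in blast)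
  have lo': "exp (?A - m * ?L) \<le> esym ?r n x / real (n choose ?r)"
    using lo Cpos cardI by (simp add: field_simps)
  have hi': "esym ?r n x / real (n choose ?r) \<le> exp (?A + m * ?L)"
    using hi Cpos cardI by (simp add: field_simps)
  have rr: "real ?r = real n - real m" using n by simp
  have c1: "exp ((?A - m * ?L) / real ?r) \<le> root ?r (esym ?r n x / real (n choose ?r))"
    unfolding root_exp[OF r0, symmetric] by (rule real_root_le_mono[OF r0 lo'])
  have c2: "root ?r (esym ?r n x / real (n choose ?r)) \<le> exp ((?A + m * ?L) / real ?r)"
    unfolding root_exp[OF r0, symmetric] by (rule real_root_le_mono[OF r0 hi'])
  show "exp ((?A - m * ?L) / (real n - real m)) \<le> symmean ?r n x"
    unfolding symmean_def rr[symmetric] by (rule c1)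
  show "symmean ?r n x \<le> exp ((?A + m * ?L) / (real n - real m))"
    unfolding symmean_def rr[symmetric] by (rule c2)
qed

lemma partb_det:
  fixes x :: "nat \<Rightarrow> real"
  assumes xpos: "\<And>i. x i > 0" and mean: "(\<lambda>n. (\<Sum>i<n. ln (x i)) / n) \<longlonglongrightarrow> L"
  shows "(\<lambda>n. symmean (n - m) n x) \<longlonglongrightarrow> exp L"
proof -
  let ?a = "\<lambda>i. ln (x i)"
  have Lm: "(\<lambda>n. Lam ?a n / n) \<longlonglongrightarrow> 0" by (rule maxlemma[OF mean])
  have c1: "(\<lambda>n. 1 / (1 - real m / real n)) \<longlonglongrightarrow> 1 / (1 - 0)"
    by (intro tendsto_divide tendsto_diff tendsto_const lim_const_over_n) auto
  have eqf: "((\<Sum>i<n. ?a i) + s * Lam ?a n) / (real n - real m)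
      = ((\<Sum>i<n. ?a i) / n + s * (Lam ?a n / n)) * (1 / (1 - real m / real n))"
    if n: "m < n" for n and s :: real
    using n by (simp add: field_simps)
  have l1: "(\<lambda>n. exp (((\<Sum>i<n. ?a i) / n + (- real m) * (Lam ?a n / n)) * (1 / (1 - real m / real n)))) \<longlonglongrightarrow> exp ((L + (- real m) * 0) * (1 / (1 - 0)))"
    by (intro tendsto_exp tendsto_mult tendsto_add mean Lm c1 tendsto_const)
  have l2: "(\<lambda>n. exp (((\<Sum>i<n. ?a i) / n + real m * (Lam ?a n / n)) * (1 / (1 - real m / real n)))) \<longlonglongrightarrow> exp ((L + real m * 0) * (1 / (1 - 0)))"
    by (intro tendsto_exp tendsto_mult tendsto_add mean Lm c1 tendsto_const)
  have e1: "exp ((L + (- real m) * 0) * (1 / (1 - 0))) = exp L" by simp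
  have e2: "exp ((L + real m * 0) * (1 / (1 - 0))) = exp L" by simp
  have l1': "(\<lambda>n. exp (((\<Sum>i<n. ?a i) / n + (- real m) * (Lam ?a n / n)) * (1 / (1 - real m / real n)))) \<longlonglongrightarrow> exp L"
    using l1 unfolding e1 .
  have l2': "(\<lambda>n. exp (((\<Sum>i<n. ?a i) / n + real m * (Lam ?a n / n)) * (1 / (1 - real m / real n)))) \<longlonglongrightarrow> exp L"
    using l2 unfolding e2 .
  show ?thesis
  proof (rule tendsto_sandwich[OF _ _ l1' l2'])
    have "eventually (\<lambda>n. m < n) sequentially" by (rule eventually_gt_at_top)
    then show "eventually (\<lambda>n. exp (((\<Sum>i<n. ?a i) / n + (- real m) * (Lam ?a n / n)) * (1 / (1 - real m / real n))) \<le> symmean (n - m) n x) sequentially"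
    proof eventually_elim
      case (elim n)
      show ?case using partb_bounds(1)[where x=x and m=m and n=n, OF xpos elim] eqf[OF elim, of "- real m"] by simp
    qed
  next
    have "eventually (\<lambda>n. m < n) sequentially" by (rule eventually_gt_at_top)
    then show "eventually (\<lambda>n. symmean (n - m) n x \<le> exp (((\<Sum>i<n. ?a i) / n + real m * (Lam ?a n / n)) * (1 / (1 - real m / real n)))) sequentially"
    proof eventually_elim
      case (elim n)
      show ?case using partb_bounds(2)[where x=x and m=m and n=n, OF xpos elim] eqf[OF elim, of "real m"] by simp
    qed
  qed
qed

context ergsetup
begin

lemma main_a:
  assumes f: "integrable M f" and m: "m > 0" and f0: "\<And>x. x \<in> space M \<Longrightarrow> f x \<ge> 0"
  shows "AE \<omega> in M. (\<lambda>n. symmean m n (\<lambda>i. f ((T ^^ i) \<omega>))) \<longlonglongrightarrow> integral\<^sup>L M f"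
proof -
  have fm[measurable]: "f \<in> borel_measurable M" using f by auto
  define fK where "fK K x = min (f x) (real K)" for K :: nat and x
  have fKi: "integrable M (fK K)" for K
    unfolding fK_def by (rule Bochner_Integration.integrable_bound[OF f]) (auto simp: f0)
  have muK: "(\<lambda>K. integral\<^sup>L M (fK K)) \<longlonglongrightarrow> integral\<^sup>L M f"
  proof (rule integral_dominated_convergence[where w="\<lambda>x. norm (f x)"])
    show "f \<in> borel_measurable M" by simp
    show "fK K \<in> borel_measurable M" for K using fKi[of K] by auto
    show "integrable M (\<lambda>x. norm (f x))" using f by auto
    show "AE x in M. norm (fK K x) \<le> norm (f x)" for K
      using AE_space by eventually_elim (auto simp: fK_def f0)
    show "AE x in M. (\<lambda>K. fK K x) \<longlonglongrightarrow> f x"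
    proof (rule AE_I2)
      fix x
      obtain N :: nat where N: "f x \<le> real N" using real_arch_simple by blast
      have "eventually (\<lambda>K. fK K x = f x) sequentially"
        unfolding eventually_sequentially fK_def
      proof (intro exI[of _ N] allI impI)
        fix K assume "N \<le> K"
        then have "real N \<le> real K" by simp
        then show "min (f x) (real K) = f x" using N by simp
      qed
      then show "(\<lambda>K. fK K x) \<longlonglongrightarrow> f x" by (rule tendsto_eventually)
    qed
  qed
  have A1: "AE \<omega> in M. (\<lambda>n. S f n \<omega> / n) \<longlonglongrightarrow> integral\<^sup>L M f" by (rule birkhoff[OF f])
  have A2: "AE \<omega> in M. \<forall>K. (\<lambda>n. S (fK K) n \<omega> / n) \<longlonglongrightarrow> integral\<^sup>L M (fK K)"
    unfolding AE_all_countable by (intro allI birkhoff fKi)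
  show ?thesis
    using A1 A2 AE_space
  proof eventually_elim
    case (elim \<omega>)
    let ?x = "\<lambda>i. f ((T ^^ i) \<omega>)"
    show ?case
    proof (rule parta_det[OF m])
      show "0 \<le> ?x i" for i using f0 Tn_space elim(3) by blast
      show "(\<lambda>n. (\<Sum>i<n. ?x i) / real n) \<longlonglongrightarrow> integral\<^sup>L M f"
        using elim(1) unfolding S_def .
      show "(\<lambda>n. (\<Sum>i<n. min (?x i) (real K)) / real n) \<longlonglongrightarrow> integral\<^sup>L M (fK K)" for K
        using elim(2) unfolding S_def fK_def by blast
      show "(\<lambda>K. integral\<^sup>L M (fK K)) \<longlonglongrightarrow> integral\<^sup>L M f" by (rule muK)
    qed
  qed
qed

lemma main_b:
  assumes fm[measurable]: "f \<in> borel_measurable M" and pos: "AE x in M. f x > 0"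
    and li: "integrable M (\<lambda>x. ln (f x))"
  shows "AE \<omega> in M. (\<lambda>n. symmean (n - m) n (\<lambda>i. f ((T ^^ i) \<omega>))) \<longlonglongrightarrow> exp (integral\<^sup>L M (\<lambda>x. ln (f x)))"
proof -
  have P: "AE \<omega> in M. \<forall>i. f ((T ^^ i) \<omega>) > 0"
    unfolding AE_all_countable
  proof
    fix i
    show "AE \<omega> in M. f ((T ^^ i) \<omega>) > 0"
      by (rule AE_Tn[OF pos]) measurable
  qed
  have A1: "AE \<omega> in M. (\<lambda>n. S (\<lambda>x. ln (f x)) n \<omega> / n) \<longlonglongrightarrow> integral\<^sup>L M (\<lambda>x. ln (f x))"
    by (rule birkhoff[OF li])
  show ?thesis
    using P A1
  proof eventually_elim
    case (elim \<omega>)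
    show ?case
      by (rule partb_det) (use elim in \<open>auto simp: S_def\<close>)
  qed
qed

end

theorem proposition3p1:
  fixes M :: "'a measure" and T :: "'a \<Rightarrow> 'a" and f :: "'a \<Rightarrow> real" and m :: nat
  assumes "prob_space M"
    and "ergodic M T"
    and "f \<in> borel_measurable M"
    and "\<And>x. x \<in> space M \<Longrightarrow> f x \<ge> 0"
  shows "(integrable M f \<and> m > 0 \<longrightarrow>
           (AE \<omega> in M. (\<lambda>n. symmean m n (\<lambda>i. f ((T ^^ i) \<omega>)))
                          \<longlonglongrightarrow> integral\<^sup>L M f))
       \<and> ((AE x in M. f x > 0) \<and> integrable M (\<lambda>x. ln (f x)) \<longrightarrow>
           (AE \<omega> in M. (\<lambda>n. symmean (n - m) n (\<lambda>i. f ((T ^^ i) \<omega>)))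
                          \<longlonglongrightarrow> exp (integral\<^sup>L M (\<lambda>x. ln (f x)))))"
proof -
  interpret ergsetup M T
    by (rule ergsetup.intro[OF assms(1)]) (rule ergsetup_axioms.intro[OF assms(2)])
  show ?thesis
    using main_a[of f m] main_b[OF assms(3)] assms(4) by blast
qed

end
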